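(* Let $\mu$ be a probability measure with bounded support contained in $[0,\infty)$, and let $b=\sup\operatorname{supp}\mu$. For $q\in[0,1]$ and $x>b$ define $$T_2(x;q)=\frac{\varphi_\mu'(x;q)}{\varphi_\mu(x;q)\,\varphi_\mu(x;1)}.$$ Then for every fixed $x>b$ and every $q\in[0,1]$, $$\frac{\partial T_2}{\partial x}(x;q)\ \ge\ \frac{\partial T_2}{\partial x}(x;0).$$
   Context: For $s\in[0,1]$ and $x>b$, set $\varphi_\mu(x;s)=s\int\frac{x}{x^2-t^2}\,d\mu(t)+\frac{1-s}{x}$. Here $\varphi_\mu'(x;s)$ denotes the derivative in $x$, namely $\varphi_\mu'(x;s)=-\big(s\int\frac{x^2+t^2}{(x^2-t^2)^2}\,d\mu(t)+\frac{1-s}{x^2}\big)$. *)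

theory Defs
  imports "HOL-Probability.Probability"
begin

definition measure_support :: "real measure \<Rightarrow> real set" where
  "measure_support M = {t. \<forall>e>0. emeasure M (ball t e) > 0}"

definition phi_mu :: "real measure \<Rightarrow> real \<Rightarrow> real \<Rightarrow> real" where
  "phi_mu M x s = s * (\<integral>t. x / (x\<^sup>2 - t\<^sup>2) \<partial>M) + (1 - s) / x"

text \<open>The explicit x-derivative of phi_mu, as given in the paper.\<close>
definition dphi_mu :: "real measure \<Rightarrow> real \<Rightarrow> real \<Rightarrow> real" where
  "dphi_mu M x s = - (s * (\<integral>t. (x\<^sup>2 + t\<^sup>2) / (x\<^sup>2 - t\<^sup>2)\<^sup>2 \<partial>M) + (1 - s) / x\<^sup>2)"

definition T2 :: "real measure \<Rightarrow> real \<Rightarrow> real \<Rightarrow> real" where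
  "T2 M x q = dphi_mu M x q / (phi_mu M x q * phi_mu M x 1)"

end

theory Submission
  imports Defs
begin

lemma alg_poly:
  fixes a c e q :: real
  shows "(q*e+2*(1-q))*(q*a+1-q)*a - (q*c+1-q)*((q*c+1-q)*a+(q*a+1-q)*c) - (q*a+1-q)^2*(a-c)
    = q*((1-q)*(a*e - a*c - c^2) + q*a*(a*e - 2*c^2 - a^2 + a*c))"
  by (simp add: algebra_simps power2_eq_square)

lemma final_ineq:
  fixes x a c e q :: real
  assumes x: "x > 0" and a: "a \<ge> 1" and N1: "a*e - a*c - c^2 \<ge> 0"
    and S: "a*e - 2*c^2 - a^2 + a*c \<ge> 0" and q: "0 \<le> q" "q \<le> 1"
  shows "((q*e+2*(1-q))*(q*a+1-q)*a - (q*c+1-q)*((q*c+1-q)*a+(q*a+1-q)*c)) / (x*(q*a+1-q)^2*a^2)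
     \<ge> ((0*e+2*(1-0))*(0*a+1-0)*a - (0*c+1-0)*((0*c+1-0)*a+(0*a+1-0)*c)) / (x*(0*a+1-0)^2*a^2)"
proof -
  define P where "P = q*a+1-q"
  have "q*1 \<le> q*a" using a q by (intro mult_left_mono) auto
  hence P: "P > 0" unfolding P_def using q by linarith
  have nn: "q*((1-q)*(a*e - a*c - c^2) + q*a*(a*e - 2*c^2 - a^2 + a*c)) \<ge> 0"
    proof -
    have "(1-q)*(a*e - a*c - c^2) \<ge> 0" using q N1 by simp
    moreover have "q*a*(a*e - 2*c^2 - a^2 + a*c) \<ge> 0" using q S a by simp
    ultimately show ?thesis using q by simp
  qed
  have r: "((0*e+2*(1-0))*(0*a+1-0)*a - (0*c+1-0)*((0*c+1-0)*a+(0*a+1-0)*c)) / (x*(0*a+1-0)^2*a^2)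
     = P^2*(a-c)/(x*P^2*a^2)" using P a x by (simp add: field_simps)
  have "((q*e+2*(1-q))*(q*a+1-q)*a - (q*c+1-q)*((q*c+1-q)*a+(q*a+1-q)*c)) / (x*(q*a+1-q)^2*a^2)
     - P^2*(a-c)/(x*P^2*a^2) = q*((1-q)*(a*e - a*c - c^2) + q*a*(a*e - 2*c^2 - a^2 + a*c))/(x*P^2*a^2)"
    unfolding P_def[symmetric] alg_poly[symmetric] by (simp add: diff_divide_distrib P_def)
  moreover have "q*((1-q)*(a*e - a*c - c^2) + q*a*(a*e - 2*c^2 - a^2 + a*c))/(x*P^2*a^2) \<ge> 0"
    using nn x P a by simp
  ultimately show ?thesis unfolding r by linarith
qed



lemma deriv_int:
  fixes k :: "real \<Rightarrow> real \<Rightarrow> real" and M :: "real measure"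
  assumes fm: "finite_measure M" and d: "\<delta> > 0"
    and int: "\<And>y. \<bar>y - x\<bar> < \<delta> \<Longrightarrow> integrable M (k y)"
    and int': "integrable M k'"
    and R: "\<And>y. \<bar>y - x\<bar> < \<delta> \<Longrightarrow> AE t in M. \<bar>k y t - k x t - (y - x) * k' t\<bar> \<le> C * (y - x)^2"
  shows "((\<lambda>y. \<integral>t. k y t \<partial>M) has_real_derivative (\<integral>t. k' t \<partial>M)) (at x)"
proof -
  define F where "F = (\<lambda>y. \<integral>t. k y t \<partial>M)"
  define D where "D = (\<integral>t. k' t \<partial>M)"
  define K where "K = C * measure M (space M)"
  have bnd: "\<bar>F y - F x - (y - x) * D\<bar> \<le> K * (y - x)^2" if y: "\<bar>y - x\<bar> < \<delta>" for y
  proof -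
    have ix: "integrable M (k x)" using int d by simp
    have iy: "integrable M (k y)" using int y by simp
    have "F y - F x - (y - x) * D = (\<integral>t. k y t - k x t - (y - x) * k' t \<partial>M)"
      unfolding F_def D_def using ix iy int' by simp
    also have "\<bar>\<dots>\<bar> \<le> (\<integral>t. \<bar>k y t - k x t - (y - x) * k' t\<bar> \<partial>M)"
      by (rule integral_abs_bound)
    also have "\<dots> \<le> (\<integral>t. C * (y - x)^2 \<partial>M)"
      using R[OF y] ix iy int' finite_measure.integrable_const[OF fm]
      by (intro integral_mono_AE) auto
    also have "\<dots> = K * (y - x)^2" unfolding K_def by simp
    finally show ?thesis .
  qed
  have "((\<lambda>y. (F y - F x) / (y - x) - D) \<longlongrightarrow> 0) (at x)"
  proof (rule Lim_null_comparison)
    show "\<forall>\<^sub>F y in at x. norm ((F y - F x) / (y - x) - D) \<le> \<bar>K\<bar> * \<bar>y - x\<bar>"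
      unfolding eventually_at
    proof (intro exI[of _ \<delta>] conjI ballI impI allI)
      fix y assume "y \<in> UNIV" "y \<noteq> x \<and> dist y x < \<delta>"
      hence ne: "y \<noteq> x" and y: "\<bar>y - x\<bar> < \<delta>" by (auto simp: dist_real_def)
      have "(F y - F x) / (y - x) - D = (F y - F x - (y - x) * D) / (y - x)"
        using ne by (simp add: field_simps)
      hence "norm ((F y - F x) / (y - x) - D) = \<bar>F y - F x - (y - x) * D\<bar> / \<bar>y - x\<bar>"
        by (simp add: abs_divide)
      also have "\<dots> \<le> K * (y - x)^2 / \<bar>y - x\<bar>"
        using bnd[OF y] by (simp add: divide_right_mono)
      also have "\<dots> = K * \<bar>y - x\<bar>" proof -
        have "(y - x)^2 = \<bar>y - x\<bar> * \<bar>y - x\<bar>" by (simp add: power2_eq_square)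
        moreover have "\<bar>y - x\<bar> \<noteq> 0" using ne by simp
        ultimately show ?thesis by (metis nonzero_mult_div_cancel_right mult.assoc)
      qed
      also have "\<dots> \<le> \<bar>K\<bar> * \<bar>y - x\<bar>" by (simp add: mult_right_mono)
      finally show "norm ((F y - F x) / (y - x) - D) \<le> \<bar>K\<bar> * \<bar>y - x\<bar>" .
    qed (use d in auto)
    show "((\<lambda>y. \<bar>K\<bar> * \<bar>y - x\<bar>) \<longlongrightarrow> 0) (at x)"
      by (intro tendsto_eq_intros) (auto intro: tendsto_ident_at)
  qed
  hence "((\<lambda>y. (F y - F x) / (y - x)) \<longlongrightarrow> D) (at x)"
    by (simp add: LIM_zero_iff)
  thus ?thesis unfolding F_def[symmetric] D_def[symmetric] by (simp add: has_field_derivative_iff)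
qed



lemma null_compact:
  fixes M :: "real measure"
  assumes sets: "sets M = sets borel" and K: "compact K" and dis: "K \<inter> measure_support M = {}"
  shows "K \<in> null_sets M"
proof -
  have "\<forall>t\<in>K. \<exists>e>0. emeasure M (ball t e) = 0"
  proof
    fix t assume "t \<in> K"
    hence "t \<notin> measure_support M" using dis by auto
    then obtain e where "e > 0" "\<not> emeasure M (ball t e) > 0" unfolding measure_support_def by auto
    thus "\<exists>e>0. emeasure M (ball t e) = 0" by (auto simp: not_gr_zero)
  qed
  then obtain e where e: "\<And>t. t \<in> K \<Longrightarrow> e t > 0 \<and> emeasure M (ball t (e t)) = 0" by metis
  have cov: "K \<subseteq> (\<Union>t\<in>K. ball t (e t))" using e by force
  obtain T where T: "T \<subseteq> K" "finite T" "K \<subseteq> (\<Union>t\<in>T. ball t (e t))"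
    using compactE_image[OF K _ cov] by blast
  have sb: "\<And>A. A \<in> sets borel \<Longrightarrow> A \<in> sets M" using sets by simp
  have "emeasure M K \<le> emeasure M (\<Union>t\<in>T. ball t (e t))"
    using T by (intro emeasure_mono) (auto intro!: sb)
  also have "\<dots> \<le> (\<Sum>t\<in>T. emeasure M (ball t (e t)))"
    using T by (intro emeasure_subadditive_finite) (auto intro!: sb)
  also have "\<dots> = 0" using T e by (intro sum.neutral) auto
  finally have "emeasure M K = 0" by simp
  moreover have "K \<in> sets M" using K by (intro sb) (simp add: compact_imp_closed borel_closed)
  ultimately show ?thesis by (auto simp: null_sets_def)
qed

lemma AE_supp:
  fixes M :: "real measure"
  assumes sets: "sets M = sets borel" and bd: "bounded (measure_support M)"
    and nn: "measure_support M \<subseteq> {0..}" and b: "b = Sup (measure_support M)"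
  shows "AE t in M. 0 \<le> t \<and> t \<le> b"
proof -
  have le: "s \<le> b" if "s \<in> measure_support M" for s
    unfolding b using that bd by (intro cSup_upper) (auto intro: bounded_imp_bdd_above)
  define N where "N = (\<Union>n::nat. {-real (Suc n) .. -1/real (Suc n)} \<union> {b + 1/real (Suc n) .. b + real (Suc n)})"
  have "N \<in> null_sets M" unfolding N_def
  proof (intro null_sets_UN null_sets.Un null_compact[OF sets])
    fix n :: nat
    have pos: "0 < 1/real (Suc n)" by simp
    show "{-real (Suc n) .. -1/real (Suc n)} \<inter> measure_support M = {}"
      proof (rule ccontr)
      assume "\<not> ?thesis"
      then obtain s where s: "s \<in> measure_support M" "s \<le> -1/real (Suc n)" by auto
      have "s \<ge> 0" using nn s(1) by auto
      thus False using pos s(2) by linarith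
    qed
    show "{b + 1/real (Suc n) .. b + real (Suc n)} \<inter> measure_support M = {}"
      proof (rule ccontr)
      assume "\<not> ?thesis"
      then obtain s where s: "s \<in> measure_support M" "b + 1/real (Suc n) \<le> s" by auto
      have "s \<le> b" using le s(1) by auto
      thus False using pos s(2) by linarith
    qed
  qed auto
  moreover have "{t \<in> space M. \<not> (0 \<le> t \<and> t \<le> b)} \<subseteq> N"
  proof
    fix t assume "t \<in> {t \<in> space M. \<not> (0 \<le> t \<and> t \<le> b)}"
    hence t: "t < 0 \<or> t > b" by auto
    define r where "r = (if t < 0 then -t else t - b)"
    have r: "r > 0" using t unfolding r_def by auto
    obtain n :: nat where n: "max r (1/r) \<le> real n" using real_arch_simple by blast
    have 1: "r \<le> real (Suc n)" using n by simp
    have "1/r \<le> real (Suc n)" using n by simp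
    hence 2: "1/real (Suc n) \<le> r" using r by (simp add: field_simps)
    show "t \<in> N"
    proof (cases "t < 0")
      case True
      hence "t \<in> {-real (Suc n) .. -1/real (Suc n)}" using 1 2 unfolding r_def by auto
      thus ?thesis unfolding N_def by blast
    next
      case False
      hence "t \<in> {b + 1/real (Suc n) .. b + real (Suc n)}" using 1 2 t unfolding r_def by auto
      thus ?thesis unfolding N_def by blast
    qed
  qed
  ultimately show ?thesis by (rule AE_I')
qed



lemma alg_D0:
  fixes x a c P C E :: real
  assumes x: "x \<noteq> 0" and a: "a \<noteq> 0" and P: "P \<noteq> 0"
  shows "((E/x^3) * ((P/x)*(a/x)) - (-(C/x^2)) * ((-(C/x^2))*(a/x) + (P/x)*(-(c/x^2))))
       / ((P/x)*(a/x))^2 = (E*P*a - C*(C*a+P*c)) / (x*P^2*a^2)"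
proof -
  have "((P/x)*(a/x))^2 = P^2*a^2/x^4" by (simp add: power_mult_distrib power_divide field_simps)
  moreover have "(E/x^3) * ((P/x)*(a/x)) - (-(C/x^2)) * ((-(C/x^2))*(a/x) + (P/x)*(-(c/x^2)))
      = (E*P*a - C*(C*a+P*c))/x^5" using x by (simp add: field_simps power2_eq_square power3_eq_cube eval_nat_numeral)
  ultimately show ?thesis using x a P by (simp add: field_simps eval_nat_numeral)
qed

lemma derivT:
  fixes F0 F1 :: "real \<Rightarrow> real" and x q G :: real
  assumes x: "x > 0" and dF0: "(F0 has_real_derivative -F1 x) (at x)"
    and dF1: "(F1 has_real_derivative -G) (at x)" and a1: "x * F0 x \<ge> 1" and q: "0 \<le> q" "q \<le> 1"
  shows "((\<lambda>y. -(q*F1 y + (1-q)*(1/y^2))/((q*F0 y + (1-q)*(1/y))*F0 y)) has_real_derivative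
     (((q*(x^3*G)+2*(1-q))*(q*(x*F0 x)+1-q)*(x*F0 x) - (q*(x^2*F1 x)+1-q)*((q*(x^2*F1 x)+1-q)*(x*F0 x)+(q*(x*F0 x)+1-q)*(x^2*F1 x))) / (x*(q*(x*F0 x)+1-q)^2*(x*F0 x)^2))) (at x)"
proof -
  define a where "a = x * F0 x"
  define c where "c = x^2 * F1 x"
  define e where "e = x^3 * G"
  define P where "P = q*a+1-q"
  define C where "C = q*c+1-q"
  define E where "E = q*e+2*(1-q)"
  have a0: "a \<noteq> 0" "a > 0" using a1 unfolding a_def by auto
  have "q*1 \<le> q*a" using a1 q unfolding a_def by (intro mult_left_mono) auto
  hence P0: "P > 0" unfolding P_def using q by linarith
  have e1: "F0 x = a/x" unfolding a_def using x by simp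
  have e2: "F1 x = c/x^2" unfolding c_def using x by simp
  have e3: "q*F0 x+(1-q)/x = P/x" unfolding P_def e1 using x by (simp add: field_simps)
  have e4: "q*F1 x+(1-q)/x^2 = C/x^2" unfolding C_def e2 using x by (simp add: field_simps)
  have e5: "q*G + 2*(1-q)/x^3 = E/x^3" unfolding E_def e_def using x by (simp add: field_simps)
  have i1: "((\<lambda>y. 1/y) has_real_derivative -1/x^2) (at x)"
    using DERIV_inverse[of x UNIV] x by (simp add: inverse_eq_divide power2_eq_square)
  have i2: "((\<lambda>y. 1/y^2) has_real_derivative -2/x^3) (at x)"
  proof -
    have "((\<lambda>y. 1/y * (1/y)) has_real_derivative (-1/x^2) * (1/x) + (-1/x^2) * (1/x)) (at x)"
      by (rule DERIV_mult[OF i1 i1])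
    moreover have "(-1/x^2) * (1/x) + (-1/x^2) * (1/x) = -2/x^3" using x
      by (simp add: field_simps power2_eq_square power3_eq_cube)
    ultimately show ?thesis by (simp add: power2_eq_square)
  qed
  have dN: "((\<lambda>y. -(q*F1 y + (1-q)*(1/y^2))) has_real_derivative (q*G + 2*(1-q)/x^3)) (at x)"
  proof -
    have "((\<lambda>y. -(q*F1 y + (1-q)*(1/y^2))) has_real_derivative -(q*(-G) + (1-q)*(-2/x^3))) (at x)"
      by (intro DERIV_minus DERIV_add DERIV_cmult dF1 i2)
    thus ?thesis by (rule DERIV_cong) (simp add: algebra_simps)
  qed
  have dphi: "((\<lambda>y. q*F0 y + (1-q)*(1/y)) has_real_derivative -(q*F1 x+(1-q)/x^2)) (at x)"
  proof -
    have "((\<lambda>y. q*F0 y + (1-q)*(1/y)) has_real_derivative q*(-F1 x) + (1-q)*(-1/x^2)) (at x)"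
      by (intro DERIV_add DERIV_cmult dF0 i1)
    thus ?thesis by (rule DERIV_cong) (simp add: algebra_simps)
  qed
  have dD: "((\<lambda>y. (q*F0 y + (1-q)*(1/y))*F0 y) has_real_derivative
     (-(q*F1 x+(1-q)/x^2))*F0 x + (-F1 x)*(q*F0 x + (1-q)*(1/x))) (at x)"
    by (rule DERIV_mult[OF dphi dF0])
  have gx: "(q*F0 x + (1-q)*(1/x))*F0 x \<noteq> 0"
  proof -
    have "(q*F0 x + (1-q)*(1/x)) = P/x" using e3 by simp
    thus ?thesis using P0 x a0 e1 by simp
  qed
  have Q: "((\<lambda>y. -(q*F1 y + (1-q)*(1/y^2))/((q*F0 y + (1-q)*(1/y))*F0 y)) has_real_derivative
    ((q*G + 2*(1-q)/x^3) * ((q*F0 x + (1-q)*(1/x))*F0 x) - ((-(q*F1 x+(1-q)/x^2))*F0 x + (-F1 x)*(q*F0 x + (1-q)*(1/x))) * (-(q*F1 x + (1-q)*(1/x^2))))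
     / (((q*F0 x + (1-q)*(1/x))*F0 x) ^ Suc (Suc 0))) (at x)"
    by (rule DERIV_quotient[OF dN dD gx])
  have V: "((q*G + 2*(1-q)/x^3) * ((q*F0 x + (1-q)*(1/x))*F0 x) - ((-(q*F1 x+(1-q)/x^2))*F0 x + (-F1 x)*(q*F0 x + (1-q)*(1/x))) * (-(q*F1 x + (1-q)*(1/x^2))))
     / (((q*F0 x + (1-q)*(1/x))*F0 x) ^ Suc (Suc 0))
   = ((E/x^3) * ((P/x)*(a/x)) - (-(C/x^2)) * ((-(C/x^2))*(a/x) + (P/x)*(-(c/x^2))))
       / ((P/x)*(a/x))^2"
  proof -
    have s1: "q*F0 x + (1-q)*(1/x) = P/x" using e3 by simp
    have s2: "q*F1 x + (1-q)*(1/x^2) = C/x^2" using e4 by simp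
    show ?thesis unfolding s1 s2 e4 e5 unfolding e1 e2 by (simp add: power2_eq_square algebra_simps)
  qed
  have V2: "((E/x^3) * ((P/x)*(a/x)) - (-(C/x^2)) * ((-(C/x^2))*(a/x) + (P/x)*(-(c/x^2))))
       / ((P/x)*(a/x))^2 = (E*P*a - C*(C*a+P*c)) / (x*P^2*a^2)"
    using x a0 P0 by (intro alg_D0) auto
  have Q': "((\<lambda>y. -(q*F1 y + (1-q)*(1/y^2))/((q*F0 y + (1-q)*(1/y))*F0 y)) has_real_derivative
      ((E*P*a - C*(C*a+P*c)) / (x*P^2*a^2))) (at x)"
    using Q unfolding V V2 .
  show ?thesis using Q' unfolding E_def P_def C_def a_def c_def e_def .
qed



lemma r1_bound:
  fixes u v d :: real
  assumes d: "d > 0" and u: "u \<ge> d" and h: "\<bar>v - u\<bar> \<le> d/2"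
  shows "\<bar>1/v - 1/u + (v - u)*(1/u^2)\<bar> \<le> 2/d^3 * (v - u)^2"
proof -
  have v: "v \<ge> d/2" using u h by linarith
  have up: "u > 0" "v > 0" using d u v by auto
  have id: "1/v - 1/u + (v - u)*(1/u^2) = (v - u)^2/(u^2* v)" using up
    by (simp add: field_simps power2_eq_square)
  have "d^3/2 \<le> u^2 * v"
  proof -
    have "d^2 \<le> u^2" using d u by (intro power_mono) auto
    hence "d^2 * (d/2) \<le> u^2 * v" using v d by (intro mult_mono) auto
    thus ?thesis by (simp add: power2_eq_square power3_eq_cube)
  qed
  hence "(v - u)^2/(u^2* v) \<le> (v - u)^2/(d^3/2)" using d up
    by (intro divide_left_mono) auto
  moreover have "0 \<le> (v - u)^2/(u^2* v)" using up by simp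
  ultimately show ?thesis unfolding id abs_of_nonneg[OF \<open>0 \<le> (v - u)^2/(u^2* v)\<close>]
    by (simp add: mult.commute)
qed

lemma r2_bound:
  fixes u v d :: real
  assumes d: "d > 0" and u: "u \<ge> d" and h: "\<bar>v - u\<bar> \<le> d/2"
  shows "\<bar>1/v^2 - 1/u^2 + 2*(v - u)*(1/u^3)\<bar> \<le> 16/d^4 * (v - u)^2"
proof -
  have v1: "v \<ge> u/2" "v \<le> 3*u/2" using u h d by linarith+
  have up: "u > 0" "v > 0" using d u v1 by auto
  have id: "1/v^2 - 1/u^2 + 2*(v - u)*(1/u^3) = (v - u)^2 * ((2* v + u)/(u^3* v^2))" using up
    by (simp add: field_simps power2_eq_square power3_eq_cube)
  have n: "2* v + u \<le> 4*u" using v1 by linarith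
  have "(u/2)^2 \<le> v^2" using v1 up by (intro power_mono) auto
  hence "u^3 * (u/2)^2 \<le> u^3* v^2" using up by (intro mult_left_mono) auto
  moreover have "u^3 * (u/2)^2 = u^5/4" by (simp add: eval_nat_numeral field_simps)
  ultimately have dd: "u^5/4 \<le> u^3* v^2" by simp
  have "(2* v + u)/(u^3* v^2) \<le> (4*u)/(u^5/4)"
    using n dd up by (intro frac_le) auto
  also have "\<dots> = 16/u^4" using up by (simp add: field_simps eval_nat_numeral)
  also have "\<dots> \<le> 16/d^4" using d u by (intro divide_left_mono power_mono mult_pos_pos) auto
  finally have X: "(2* v + u)/(u^3* v^2) \<le> 16/d^4" .
  have X0: "(2* v + u)/(u^3* v^2) \<ge> 0" using up by auto
  have "(v - u)^2 * ((2* v + u)/(u^3* v^2)) \<le> (v - u)^2 * (16/d^4)"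
    by (rule mult_left_mono[OF X]) simp
  moreover have "0 \<le> (v - u)^2 * ((2* v + u)/(u^3* v^2))"
    by (rule mult_nonneg_nonneg[OF _ X0]) simp
  ultimately have "(v - u)^2 * ((2* v + u)/(u^3* v^2)) \<le> (v - u)^2 * (16/d^4)"
    "0 \<le> (v - u)^2 * ((2* v + u)/(u^3* v^2))" .
  thus ?thesis unfolding id abs_of_nonneg[OF \<open>0 \<le> (v - u)^2 * ((2* v + u)/(u^3* v^2))\<close>]
    by (simp only: mult.commute)
qed



lemma k0_gen: fixes y A B :: real assumes A: "A > 0" and B: "B > 0" and s: "A + B = 2*y"
  shows "y/(A*B) = (1/A + 1/B)/2"
proof -
  have "(1/A + 1/B)/2 = (A+B)/(2*(A*B))" using A B by (simp add: field_simps)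
  thus ?thesis unfolding s by simp
qed

lemma k0_id: fixes y t :: real assumes "y - t > 0" "y + t > 0"
  shows "y/(y^2-t^2) = (1/(y-t) + 1/(y+t))/2"
proof -
  have f: "y^2 - t^2 = (y-t)*(y+t)" by (simp add: algebra_simps power2_eq_square)
  show ?thesis unfolding f by (rule k0_gen) (use assms in auto)
qed

lemma k1_gen: fixes A B :: real assumes A: "A > 0" and B: "B > 0"
  shows "((A^2+B^2)/2)/(A*B)^2 = (1/A^2 + 1/B^2)/2"
  using A B by (simp add: field_simps power_mult_distrib)

lemma k1_id: fixes y t :: real assumes "y - t > 0" "y + t > 0"
  shows "(y^2+t^2)/(y^2-t^2)^2 = (1/(y-t)^2 + 1/(y+t)^2)/2"
proof -
  have f: "y^2 - t^2 = (y-t)*(y+t)" by (simp add: algebra_simps power2_eq_square)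
  have g: "y^2 + t^2 = ((y-t)^2 + (y+t)^2)/2" by (simp add: algebra_simps power2_eq_square)
  show ?thesis unfolding f g by (rule k1_gen) (use assms in auto)
qed

lemma lin0: fixes p q r s h U V :: real
  shows "(p+q)/2 - (r+s)/2 - h*(-((U+V)/2)) = ((p - r + h*U) + (q - s + h*V))/2"
  by (simp add: field_simps)

lemma lin1: fixes p q r s h U V :: real
  shows "(p+q)/2 - (r+s)/2 - h*(-(U+V)) = ((p - r + 2*h*U) + (q - s + 2*h*V))/2"
  by (simp add: field_simps)

lemma k2_gen: fixes x A B :: real assumes A: "A > 0" and B: "B > 0" and s: "A + B = 2*x"
  shows "x^3*(1/A^3 + 1/B^3) = 8*(x^2/(A*B))^3 - 6*(x^2/(A*B))^2"
proof -
  have Bd: "B = 2*x - A" using s by simp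
  have c: "A^3 + B^3 = 8*x^3 - 6*x*A*B" unfolding Bd by (simp add: algebra_simps power3_eq_cube)
  have l: "x^3*(1/A^3 + 1/B^3) = x^3*(A^3+B^3)/(A*B)^3" using A B
    by (simp add: field_simps power_mult_distrib)
  have r: "8*(x^2/(A*B))^3 - 6*(x^2/(A*B))^2 = (8*x^6 - 6*x^4*(A*B))/(A*B)^3" using A B
    by (simp add: field_simps power_mult_distrib power_divide eval_nat_numeral)
  show ?thesis unfolding l r c by (simp add: algebra_simps eval_nat_numeral)
qed

lemma k2_id: fixes x t :: real assumes "x - t > 0" "x + t > 0"
  shows "x^3*(1/(x-t)^3 + 1/(x+t)^3) = 8*(x^2/(x^2-t^2))^3 - 6*(x^2/(x^2-t^2))^2"
proof -
  have f: "x^2 - t^2 = (x-t)*(x+t)" by (simp add: algebra_simps power2_eq_square)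
  show ?thesis unfolding f by (rule k2_gen) (use assms in auto)
qed

locale setting =
  fixes b x t y d :: real
  assumes t: "0 \<le> t" "t \<le> b" and bx: "b < x" and y: "\<bar>y - x\<bar> \<le> (x - b)/2" and dd: "d = x - b"
begin
lemma d: "d > 0" "x - t \<ge> d" "x + t \<ge> d" "y - t \<ge> d/2" "y + t \<ge> d/2" "x > 0"
  using t bx abs_le_D1[OF y] abs_le_D2[OF y] unfolding dd by auto

lemma R0: "\<bar>y/(y^2-t^2) - x/(x^2-t^2) - (y-x)*(-((x^2+t^2)/(x^2-t^2)^2))\<bar> \<le> 2/d^3*(y-x)^2"
proof -
  have h1: "\<bar>(y-t) - (x-t)\<bar> \<le> d/2" "\<bar>(y+t) - (x+t)\<bar> \<le> d/2" using y unfolding dd by auto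
  have A: "\<bar>1/(y-t) - 1/(x-t) + ((y-t)-(x-t))*(1/(x-t)^2)\<bar> \<le> 2/d^3*((y-t)-(x-t))^2"
    by (rule r1_bound) (use d h1 in auto)
  have B: "\<bar>1/(y+t) - 1/(x+t) + ((y+t)-(x+t))*(1/(x+t)^2)\<bar> \<le> 2/d^3*((y+t)-(x+t))^2"
    by (rule r1_bound) (use d h1 in auto)
  have e: "y/(y^2-t^2) - x/(x^2-t^2) - (y-x)*(-((x^2+t^2)/(x^2-t^2)^2)) =
    ((1/(y-t) - 1/(x-t) + (y-x)*(1/(x-t)^2)) + (1/(y+t) - 1/(x+t) + (y-x)*(1/(x+t)^2)))/2"
    using d by (simp only: k0_id k1_id lin0)
  show ?thesis unfolding e using A B by simp
qed

lemma R1: "\<bar>(y^2+t^2)/(y^2-t^2)^2 - (x^2+t^2)/(x^2-t^2)^2 - (y-x)*(-(1/(x-t)^3+1/(x+t)^3))\<bar> \<le> 16/d^4*(y-x)^2"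
proof -
  have h1: "\<bar>(y-t) - (x-t)\<bar> \<le> d/2" "\<bar>(y+t) - (x+t)\<bar> \<le> d/2" using y unfolding dd by auto
  have A: "\<bar>1/(y-t)^2 - 1/(x-t)^2 + 2*((y-t)-(x-t))*(1/(x-t)^3)\<bar> \<le> 16/d^4*((y-t)-(x-t))^2"
    by (rule r2_bound) (use d h1 in auto)
  have B: "\<bar>1/(y+t)^2 - 1/(x+t)^2 + 2*((y+t)-(x+t))*(1/(x+t)^3)\<bar> \<le> 16/d^4*((y+t)-(x+t))^2"
    by (rule r2_bound) (use d h1 in auto)
  have e: "(y^2+t^2)/(y^2-t^2)^2 - (x^2+t^2)/(x^2-t^2)^2 - (y-x)*(-(1/(x-t)^3+1/(x+t)^3)) =
    ((1/(y-t)^2 - 1/(x-t)^2 + 2*(y-x)*(1/(x-t)^3)) + (1/(y+t)^2 - 1/(x+t)^2 + 2*(y-x)*(1/(x+t)^3)))/2"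
    using d by (simp only: k1_id lin1)
  show ?thesis unfolding e using A B by simp
qed

lemma inv_le: fixes w e :: real assumes "e > 0" "w \<ge> e" shows "\<bar>1/w\<bar> \<le> 1/e"
  using assms by (simp add: frac_le)

lemma B0: "\<bar>y/(y^2-t^2)\<bar> \<le> 2/d"
proof -
  have "\<bar>1/(y-t)\<bar> \<le> 1/(d/2)" "\<bar>1/(y+t)\<bar> \<le> 1/(d/2)" using d by (intro inv_le; simp)+
  thus ?thesis using d by (simp add: k0_id)
qed

lemma B1: "\<bar>(y^2+t^2)/(y^2-t^2)^2\<bar> \<le> 4/d^2"
proof -
  have "\<bar>1/(y-t)^2\<bar> \<le> 1/(d/2)^2" "\<bar>1/(y+t)^2\<bar> \<le> 1/(d/2)^2" using d
    by (intro inv_le power_mono; simp)+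
  thus ?thesis using d by (simp add: k1_id power_divide)
qed

lemma B2: "\<bar>1/(x-t)^3+1/(x+t)^3\<bar> \<le> 2/d^3"
proof -
  have "\<bar>1/(x-t)^3\<bar> \<le> 1/d^3" "\<bar>1/(x+t)^3\<bar> \<le> 1/d^3" using d
    by (intro inv_le power_mono; simp)+
  thus ?thesis using abs_triangle_ineq[of "1/(x-t)^3" "1/(x+t)^3"] by simp
qed

lemma Bp: "1 \<le> x^2/(x^2-t^2)" "x^2/(x^2-t^2) \<le> x/d"
proof -
  have f: "x^2 - t^2 = (x-t)*(x+t)" by (simp add: algebra_simps power2_eq_square)
  have pos: "x^2 - t^2 > 0" unfolding f using d by simp
  have "x^2 - t^2 \<le> x^2" using t by simp
  thus "1 \<le> x^2/(x^2-t^2)" using pos by simp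
  have "d * x \<le> (x-t)*(x+t)" using d t by (intro mult_mono) auto
  hence "x^2/(x^2-t^2) \<le> x^2/(d*x)" unfolding f using d pos f
    by (intro divide_left_mono) auto
  also have "\<dots> = x/d" using d by (simp add: power2_eq_square)
  finally show "x^2/(x^2-t^2) \<le> x/d" .
qed
end


lemma moments:
  fixes M :: "'a measure" and p :: "'a \<Rightarrow> real"
  assumes P: "prob_space M" and i1: "integrable M p" and i2: "integrable M (\<lambda>t. p t^2)"
    and i3: "integrable M (\<lambda>t. p t^3)" and ge: "AE t in M. p t \<ge> 1"
  shows "(\<integral>t. p t \<partial>M) \<ge> 1" "(\<integral>t. p t^2 \<partial>M) \<ge> (\<integral>t. p t \<partial>M)"
    "(\<integral>t. p t^3 \<partial>M) \<ge> (\<integral>t. p t^2 \<partial>M)"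
    "(\<integral>t. p t \<partial>M) * (\<integral>t. p t^3 \<partial>M) \<ge> (\<integral>t. p t^2 \<partial>M)^2"
proof -
  define m1 where "m1 = (\<integral>t. p t \<partial>M)"
  define m2 where "m2 = (\<integral>t. p t^2 \<partial>M)"
  define m3 where "m3 = (\<integral>t. p t^3 \<partial>M)"
  have fm: "finite_measure M" using P unfolding prob_space_def by simp
  have "(\<integral>t. 1 \<partial>M) \<le> m1" unfolding m1_def
    using ge i1 finite_measure.integrable_const[OF fm] by (intro integral_mono_AE) auto
  moreover have "(\<integral>t. 1 \<partial>M) = (1::real)" using prob_space.prob_space[OF P] by simp
  ultimately show a: "m1 \<ge> 1" unfolding m1_def by simp
  have "AE t in M. p t \<le> p t^2"
    using ge by eventually_elim (simp add: power2_eq_square)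
  thus "m2 \<ge> m1" unfolding m1_def m2_def using i1 i2 by (intro integral_mono_AE) auto
  have "AE t in M. p t^2 \<le> p t^3"
    using ge by eventually_elim (simp add: power2_eq_square power3_eq_cube)
  thus "m3 \<ge> m2" unfolding m3_def m2_def using i3 i2 by (intro integral_mono_AE) auto
  define l where "l = m2/m1"
  have "0 \<le> (\<integral>t. p t^3 - 2*l*p t^2 + l^2 * p t \<partial>M)"
  proof (rule integral_nonneg_AE)
    show "AE t in M. 0 \<le> p t^3 - 2*l*p t^2 + l^2 * p t"
      using ge
    proof eventually_elim
      fix t assume "1 \<le> p t"
      hence "0 \<le> p t * (p t - l)^2" by simp
      also have "\<dots> = p t^3 - 2*l*p t^2 + l^2 * p t"
        by (simp add: algebra_simps power2_eq_square power3_eq_cube)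
      finally show "0 \<le> p t^3 - 2*l*p t^2 + l^2 * p t" .
    qed
  qed
  also have "\<dots> = m3 - 2*l*m2 + l^2*m1" unfolding m1_def m2_def m3_def
    using i1 i2 i3 by simp
  also have "\<dots> = (m1*m3 - m2^2)/m1" unfolding l_def using a
    by (simp add: field_simps power2_eq_square)
  finally show "m1 * m3 \<ge> m2^2" using a by (simp add: zero_le_divide_iff)
qed

theorem mainTheorem13:
  fixes M :: "real measure" and b x q :: real
  assumes "prob_space M"
    and "sets M = sets borel"
    and "bounded (measure_support M)"
    and "measure_support M \<subseteq> {0..}"
    and "b = Sup (measure_support M)"
    and "x > b"
    and "q \<in> {0..1}"
  shows "deriv (\<lambda>y. T2 M y q) x \<ge> deriv (\<lambda>y. T2 M y 0) x"
proof -
  have fm: "finite_measure M" using assms(1) unfolding prob_space_def by simp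
  have ae: "AE t in M. 0 \<le> t \<and> t \<le> b" by (rule AE_supp[OF assms(2-5)])
  have b0: "0 \<le> b"
  proof (rule ccontr)
    assume "\<not> 0 \<le> b"
    hence "AE t in M. False" using ae by (intro eventually_mono[OF ae]) auto
    thus False using prob_space.AE_False[OF assms(1)] by simp
  qed
  have x0: "x > 0" using b0 assms(6) by simp
  define d where "d = x - b"
  have d0: "d > 0" using assms(6) d_def by simp
  have mseq: "borel_measurable M = (borel_measurable borel :: (real \<Rightarrow> real) set)"
    using measurable_cong_sets[OF assms(2) refl, of "borel :: real measure"] by simp
  have meas: "f \<in> borel_measurable M" if "f \<in> borel_measurable borel" for f :: "real \<Rightarrow> real"
    using that measurable_cong_sets[OF assms(2) refl, of "borel :: real measure"] by simp
  have intb: "integrable M f" if "f \<in> borel_measurable borel" "AE t in M. \<bar>f t\<bar> \<le> B" for f :: "real \<Rightarrow> real" and B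
    using finite_measure.integrable_const_bound[OF fm, of f B] meas[OF that(1)] that(2) by simp
  have S: "setting b x t y d" if "0 \<le> t" "t \<le> b" "\<bar>y - x\<bar> \<le> (x-b)/2" for t y
    unfolding setting_def d_def using assms(6) that by auto
  define F0 where "F0 = (\<lambda>y. \<integral>t. y/(y^2-t^2) \<partial>M)"
  define F1 where "F1 = (\<lambda>y. \<integral>t. (y^2+t^2)/(y^2-t^2)^2 \<partial>M)"
  define G where "G = (\<integral>t. 1/(x-t)^3 + 1/(x+t)^3 \<partial>M)"
  have iF1: "integrable M (\<lambda>t. (y^2+t^2)/(y^2-t^2)^2)" if "\<bar>y - x\<bar> < d/2" for y
  proof (rule intb)
    show "AE t in M. \<bar>(y^2+t^2)/(y^2-t^2)^2\<bar> \<le> 4/d^2"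
      using ae by eventually_elim (intro setting.B1[OF S]; use that d_def in auto)
  qed measurable
  have iF0: "integrable M (\<lambda>t. y/(y^2-t^2))" if "\<bar>y - x\<bar> < d/2" for y
  proof (rule intb)
    show "AE t in M. \<bar>y/(y^2-t^2)\<bar> \<le> 2/d"
      using ae by eventually_elim (intro setting.B0[OF S]; use that d_def in auto)
  qed measurable
  have iG: "integrable M (\<lambda>t. 1/(x-t)^3 + 1/(x+t)^3)"
  proof (rule intb)
    show "AE t in M. \<bar>1/(x-t)^3 + 1/(x+t)^3\<bar> \<le> 2/d^3"
      using ae by eventually_elim (intro setting.B2[OF S, where y=x]; use d0 d_def in auto)
  qed measurable
  have dF0: "(F0 has_real_derivative -F1 x) (at x)"
  proof -
    have "(F0 has_real_derivative (\<integral>t. -((x^2+t^2)/(x^2-t^2)^2) \<partial>M)) (at x)"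
      unfolding F0_def
    proof (rule deriv_int[OF fm, where k="\<lambda>y t. y/(y^2-t^2)" and \<delta>="d/2" and C="2/d^3"])
      show "d/2 > 0" using d0 by simp
      show "integrable M (\<lambda>t. y/(y^2-t^2))" if "\<bar>y - x\<bar> < d/2" for y using iF0 that .
      show "integrable M (\<lambda>t. -((x^2+t^2)/(x^2-t^2)^2))" using d0 by (intro integrable_minus iF1) simp
      show "AE t in M. \<bar>y/(y^2-t^2) - x/(x^2-t^2) - (y-x)*(-((x^2+t^2)/(x^2-t^2)^2))\<bar> \<le> 2/d^3*(y-x)^2"
        if "\<bar>y - x\<bar> < d/2" for y
        using ae by eventually_elim (intro setting.R0[OF S]; use that d_def in auto)
    qed
    thus ?thesis unfolding F1_def by simp
  qed
  have dF1: "(F1 has_real_derivative -G) (at x)"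
  proof -
    have "(F1 has_real_derivative (\<integral>t. -(1/(x-t)^3 + 1/(x+t)^3) \<partial>M)) (at x)"
      unfolding F1_def
    proof (rule deriv_int[OF fm, where k="\<lambda>y t. (y^2+t^2)/(y^2-t^2)^2" and \<delta>="d/2" and C="16/d^4"])
      show "d/2 > 0" using d0 by simp
      show "integrable M (\<lambda>t. (y^2+t^2)/(y^2-t^2)^2)" if "\<bar>y - x\<bar> < d/2" for y using iF1 that .
      show "integrable M (\<lambda>t. -(1/(x-t)^3 + 1/(x+t)^3))" by (rule integrable_minus[OF iG])
      show "AE t in M. \<bar>(y^2+t^2)/(y^2-t^2)^2 - (x^2+t^2)/(x^2-t^2)^2 - (y-x)*(-(1/(x-t)^3 + 1/(x+t)^3))\<bar> \<le> 16/d^4*(y-x)^2"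
        if "\<bar>y - x\<bar> < d/2" for y
        using ae by eventually_elim (intro setting.R1[OF S]; use that d_def in auto)
    qed
    thus ?thesis unfolding G_def by (simp only: integral_minus)
  qed
  define p where "p = (\<lambda>t. x^2/(x^2-t^2))"
  have pb: "AE t in M. 1 \<le> p t \<and> p t \<le> x/d"
    using ae unfolding p_def by eventually_elim (intro conjI setting.Bp[OF S, where y=x]; use d0 d_def in auto)
  have ip: "integrable M (\<lambda>t. p t ^ k)" for k
  proof (rule intb)
    show "AE t in M. \<bar>p t ^ k\<bar> \<le> (x/d)^k"
      using pb by eventually_elim (auto simp: abs_of_nonneg intro: power_mono)
  qed (simp add: p_def)
  have mom: "(\<integral>t. p t \<partial>M) \<ge> 1" "(\<integral>t. p t^2 \<partial>M) \<ge> (\<integral>t. p t \<partial>M)"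
    "(\<integral>t. p t^3 \<partial>M) \<ge> (\<integral>t. p t^2 \<partial>M)"
    "(\<integral>t. p t \<partial>M) * (\<integral>t. p t^3 \<partial>M) \<ge> (\<integral>t. p t^2 \<partial>M)^2"
    using moments[OF assms(1), of p] ip[of 1] ip[of 2] ip[of 3] pb by auto
  define m1 where "m1 = (\<integral>t. p t \<partial>M)"
  define m2 where "m2 = (\<integral>t. p t^2 \<partial>M)"
  define m3 where "m3 = (\<integral>t. p t^3 \<partial>M)"
  have xm: "\<And>t. 0 \<le> t \<and> t \<le> b \<Longrightarrow> x - t > 0 \<and> x + t > 0 \<and> x^2 - t^2 \<noteq> 0"
  proof -
    fix t assume t: "0 \<le> t \<and> t \<le> b"
    have "x^2 - t^2 = (x-t)*(x+t)" by (simp add: algebra_simps power2_eq_square)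
    thus "x - t > 0 \<and> x + t > 0 \<and> x^2 - t^2 \<noteq> 0" using t assms(6) by auto
  qed
  have ea: "x * F0 x = m1"
  proof -
    have "x * F0 x = (\<integral>t. x * (x/(x^2-t^2)) \<partial>M)" unfolding F0_def by (rule integral_mult_right_zero[symmetric])
    also have "\<dots> = m1" unfolding m1_def p_def by (simp add: power2_eq_square)
    finally show ?thesis .
  qed
  have ec: "x^2 * F1 x = 2*m2 - m1"
  proof -
    have "x^2 * F1 x = (\<integral>t. x^2 * ((x^2+t^2)/(x^2-t^2)^2) \<partial>M)" unfolding F1_def by (rule integral_mult_right_zero[symmetric])
    also have "\<dots> = (\<integral>t. 2 * p t^2 - p t \<partial>M)"
    proof (rule integral_cong_AE)
      show "AE t in M. x^2 * ((x^2+t^2)/(x^2-t^2)^2) = 2 * p t^2 - p t"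
        using ae
      proof eventually_elim
        fix t assume "0 \<le> t \<and> t \<le> b"
        hence nz: "x^2 - t^2 \<noteq> 0" using xm by blast
        have g: "\<And>X D :: real. D \<noteq> 0 \<Longrightarrow> X * ((2*X - D)/D^2) = 2*(X/D)^2 - X/D"
          by (simp add: field_simps power2_eq_square)
        have h: "x^2+t^2 = 2*x^2 - (x^2-t^2)" by simp
        show "x^2 * ((x^2+t^2)/(x^2-t^2)^2) = 2 * p t^2 - p t"
          unfolding p_def h using g[OF nz] .
      qed
    qed (unfold mseq p_def, measurable)+
    also have "\<dots> = 2*m2 - m1" unfolding m1_def m2_def using ip[of 1] ip[of 2] by simp
    finally show ?thesis .
  qed
  have ee: "x^3 * G = 8*m3 - 6*m2"
  proof -
    have "x^3 * G = (\<integral>t. x^3 * (1/(x-t)^3 + 1/(x+t)^3) \<partial>M)" unfolding G_def by (rule integral_mult_right_zero[symmetric])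
    also have "\<dots> = (\<integral>t. 8 * p t^3 - 6 * p t^2 \<partial>M)"
    proof (rule integral_cong_AE)
      show "AE t in M. x^3 * (1/(x-t)^3 + 1/(x+t)^3) = 8 * p t^3 - 6 * p t^2"
        using ae
      proof eventually_elim
        fix t assume "0 \<le> t \<and> t \<le> b"
        hence "x - t > 0" "x + t > 0" using xm by blast+
        thus "x^3 * (1/(x-t)^3 + 1/(x+t)^3) = 8 * p t^3 - 6 * p t^2"
          unfolding p_def by (rule k2_id)
      qed
    qed (unfold mseq p_def, measurable)+
    also have "\<dots> = 8*m3 - 6*m2" unfolding m3_def m2_def using ip[of 3] ip[of 2] by simp
    finally show ?thesis .
  qed
  have m1: "m1 \<ge> 1" "m2 \<ge> m1" "m3 \<ge> m2" "m1*m3 \<ge> m2^2" using mom unfolding m1_def m2_def m3_def by auto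
  have mm1: "m1*m3 \<ge> m1*m2" using m1 by (intro mult_left_mono) auto
  have mm2: "m1*m2 \<ge> m1*m1" using m1 by (intro mult_left_mono) auto
  have sq: "m2*m2 \<le> m1*m3" using m1(4) by (simp add: power2_eq_square)
  have N1e: "(x*F0 x)*(x^3*G) - (x*F0 x)*(x^2*F1 x) - (x^2*F1 x)^2 = 8*(m1*m3) - 4*(m1*m2) - 4*(m2*m2)"
    unfolding ea ec ee by (simp add: algebra_simps power2_eq_square)
  have N1: "(x*F0 x)*(x^3*G) - (x*F0 x)*(x^2*F1 x) - (x^2*F1 x)^2 \<ge> 0"
  proof -
    have l: "\<And>(A::real) (B::real) (D::real). B \<le> A \<Longrightarrow> D \<le> A \<Longrightarrow> 0 \<le> 8*A - 4*D - 4*B" by linarith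
    show ?thesis unfolding N1e by (rule l[OF sq mm1])
  qed
  have SSe: "(x*F0 x)*(x^3*G) - 2*(x^2*F1 x)^2 - (x*F0 x)^2 + (x*F0 x)*(x^2*F1 x) = 4*(2*(m1*m3) + m1*m2 - 2*(m2*m2) - m1*m1)"
    unfolding ea ec ee by (simp add: algebra_simps power2_eq_square)
  have SS: "(x*F0 x)*(x^3*G) - 2*(x^2*F1 x)^2 - (x*F0 x)^2 + (x*F0 x)*(x^2*F1 x) \<ge> 0"
  proof -
    have l: "\<And>(A::real) (B::real) (C::real) (D::real). B \<le> A \<Longrightarrow> C \<le> D \<Longrightarrow> 0 \<le> 4*(2*A + D - 2*B - C)" by (intro mult_nonneg_nonneg; linarith)
    show ?thesis unfolding SSe by (rule l[OF sq mm2])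
  qed
  have Teq: "T2 M y r = -(r*F1 y + (1-r)*(1/y^2))/((r*F0 y + (1-r)*(1/y))*F0 y)" for y r
    by (simp add: T2_def dphi_mu_def phi_mu_def F0_def F1_def)
  have q: "0 \<le> q" "q \<le> 1" using assms(7) by auto
  have a1: "x * F0 x \<ge> 1" using ea m1 by simp
  have D1: "deriv (\<lambda>y. T2 M y q) x = ((q*(x^3*G)+2*(1-q))*(q*(x*F0 x)+1-q)*(x*F0 x) - (q*(x^2*F1 x)+1-q)*((q*(x^2*F1 x)+1-q)*(x*F0 x)+(q*(x*F0 x)+1-q)*(x^2*F1 x))) / (x*(q*(x*F0 x)+1-q)^2*(x*F0 x)^2)"
    unfolding Teq by (rule DERIV_imp_deriv[OF derivT[OF x0 dF0 dF1 a1 q]])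
  have D0: "deriv (\<lambda>y. T2 M y 0) x = ((0*(x^3*G)+2*(1-0))*(0*(x*F0 x)+1-0)*(x*F0 x) - (0*(x^2*F1 x)+1-0)*((0*(x^2*F1 x)+1-0)*(x*F0 x)+(0*(x*F0 x)+1-0)*(x^2*F1 x))) / (x*(0*(x*F0 x)+1-0)^2*(x*F0 x)^2)"
    unfolding Teq by (rule DERIV_imp_deriv[OF derivT[OF x0 dF0 dF1 a1, of 0]]) auto
  show ?thesis unfolding D1 D0 by (rule final_ineq[OF x0 a1 N1 SS q])
qed

end
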